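(* Let $G$ be a finite connected graph in which every induced cycle is a square (an induced $4$-cycle) and in which the two-squares graph does not embed. Then $G$ is $\mathcal{C}$-$\mathrm{HH}$.
   Context: Graphs are simple; subgraphs are induced; "embeds" means is isomorphic to an induced subgraph. A homomorphism maps edges to edges. A graph $G$ is $\mathcal{C}$-$\mathrm{HH}$ if every homomorphism from a finite connected induced subgraph of $G$ into $G$ extends to a homomorphism $G\to G$. The two-squares graph is the $6$-cycle $v_1\dots v_6v_1$ with the single chord $v_3v_6$. *)

theory Defs
  imports Main
begin

definition simple_graph :: "'a set \<Rightarrow> ('a \<Rightarrow> 'a \<Rightarrow> bool) \<Rightarrow> bool" where
  "simple_graph V E \<longleftrightarrow>
     (\<forall>x y. E x y \<longrightarrow> x \<in> V \<and> y \<in> V) \<and>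
     (\<forall>x y. E x y \<longrightarrow> E y x) \<and>
     (\<forall>x. \<not> E x x)"

definition connected_on :: "('a \<Rightarrow> 'a \<Rightarrow> bool) \<Rightarrow> 'a set \<Rightarrow> bool" where
  "connected_on E S \<longleftrightarrow> S \<noteq> {} \<and>
     (\<forall>x\<in>S. \<forall>y\<in>S. (\<lambda>u v. u \<in> S \<and> v \<in> S \<and> E u v)\<^sup>*\<^sup>* x y)"

definition graph_hom :: "'a set \<Rightarrow> ('a \<Rightarrow> 'a \<Rightarrow> bool) \<Rightarrow> 'b set \<Rightarrow> ('b \<Rightarrow> 'b \<Rightarrow> bool)
    \<Rightarrow> ('a \<Rightarrow> 'b) \<Rightarrow> bool" where
  "graph_hom S E W F f \<longleftrightarrow>
     (\<forall>x\<in>S. f x \<in> W) \<and> (\<forall>x\<in>S. \<forall>y\<in>S. E x y \<longrightarrow> F (f x) (f y))"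

definition induced_cycle :: "'a set \<Rightarrow> ('a \<Rightarrow> 'a \<Rightarrow> bool) \<Rightarrow> 'a list \<Rightarrow> bool" where
  "induced_cycle V E vs \<longleftrightarrow>
     length vs \<ge> 3 \<and> distinct vs \<and> set vs \<subseteq> V \<and>
     (\<forall>i<length vs. \<forall>j<length vs.
        E (vs ! i) (vs ! j) \<longleftrightarrow>
          (j = Suc i mod length vs \<or> i = Suc j mod length vs))"

definition two_squares_edge :: "nat \<Rightarrow> nat \<Rightarrow> bool" where
  "two_squares_edge i j \<longleftrightarrow>
     {i, j} \<in> {{1,2},{2,3},{3,4},{4,5},{5,6},{6,1},{3,6}}"

definition embeds :: "'b set \<Rightarrow> ('b \<Rightarrow> 'b \<Rightarrow> bool) \<Rightarrow> 'a set \<Rightarrow> ('a \<Rightarrow> 'a \<Rightarrow> bool) \<Rightarrow> bool" where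
  "embeds W F V E \<longleftrightarrow>
     (\<exists>g. inj_on g W \<and> g ` W \<subseteq> V \<and>
          (\<forall>x\<in>W. \<forall>y\<in>W. E (g x) (g y) \<longleftrightarrow> F x y))"

definition C_HH :: "'a set \<Rightarrow> ('a \<Rightarrow> 'a \<Rightarrow> bool) \<Rightarrow> bool" where
  "C_HH V E \<longleftrightarrow>
     (\<forall>S f. S \<subseteq> V \<and> finite S \<and> connected_on E S \<and> graph_hom S E V E f \<longrightarrow>
        (\<exists>h. graph_hom V E V E h \<and> (\<forall>x\<in>S. h x = f x)))"

end

theory Submission
  imports Defs
begin


fun walk :: "('a \<Rightarrow> 'a \<Rightarrow> bool) \<Rightarrow> 'a list \<Rightarrow> bool" where
  "walk E [] = False"
| "walk E [x] = True"
| "walk E (x#y#ys) = (E x y \<and> walk E (y#ys))"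

lemma walk_append: "xs \<noteq> [] \<Longrightarrow> walk E (xs @ y # ys) \<longleftrightarrow> walk E xs \<and> E (last xs) y \<and> walk E (y#ys)"
  by (induction xs rule: induct_list012) auto

lemma walk_nth: "walk E xs \<Longrightarrow> Suc i < length xs \<Longrightarrow> E (xs!i) (xs!Suc i)"
  by (induction xs arbitrary: i rule: induct_list012) (auto simp: nth_Cons split: nat.splits)

lemma walk_split: "walk E xs \<Longrightarrow> 0 < k \<Longrightarrow> k < length xs \<Longrightarrow> walk E (take k xs) \<and> walk E (drop k xs)"
proof -
  assume a: "walk E xs" "0 < k" "k < length xs"
  have d: "drop k xs = xs!k # drop (Suc k) xs" using a by (simp add: Cons_nth_drop_Suc)
  have "walk E (take k xs @ xs!k # drop (Suc k) xs)" using a d by (metis append_take_drop_id)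
  moreover have "take k xs \<noteq> []" using a by auto
  ultimately show ?thesis using walk_append[of "take k xs" E "xs!k" "drop (Suc k) xs"] d by simp
qed

lemma walk_take: "walk E xs \<Longrightarrow> 0 < k \<Longrightarrow> walk E (take k xs)"
  using walk_split[of E xs k] by (cases "k < length xs") auto

lemma walk_drop: "walk E xs \<Longrightarrow> k < length xs \<Longrightarrow> walk E (drop k xs)"
  using walk_split[of E xs k] by (cases "k = 0") auto

lemma walk_ne: "walk E xs \<Longrightarrow> xs \<noteq> []" by auto

lemma splice1:
  assumes "walk E xs" "i < j" "j < length xs" "E (xs!i) (xs!j)"
  shows "walk E (take (Suc i) xs @ drop j xs)"
proof -
  have d: "drop j xs = xs!j # drop (Suc j) xs" using assms by (simp add: Cons_nth_drop_Suc)
  have l: "last (take (Suc i) xs) = xs!i" using assms by (subst last_conv_nth) auto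
  have ne: "take (Suc i) xs \<noteq> []" using assms by auto
  show ?thesis unfolding d
    using walk_append[OF ne, of E "xs!j" "drop (Suc j) xs"] assms l walk_take[of E xs "Suc i"]
      walk_drop[of E xs j] d by simp
qed

lemma splice2:
  assumes "walk E xs" "i < j" "j < length xs" "xs!i = xs!j"
  shows "walk E (take i xs @ drop j xs)"
proof (cases "i = 0")
  case True thus ?thesis using assms walk_drop by auto
next
  case False
  have d: "drop j xs = xs!j # drop (Suc j) xs" using assms by (simp add: Cons_nth_drop_Suc)
  have l: "last (take i xs) = xs!(i - 1)" using assms False by (subst last_conv_nth) auto
  have e: "E (xs!(i-1)) (xs!i)" using walk_nth[of E xs "i-1"] assms False by auto
  have ne: "take i xs \<noteq> []" using assms False by auto
  show ?thesis unfolding d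
    using walk_append[OF ne, of E "xs!j" "drop (Suc j) xs"] assms l e False walk_take[of E xs i]
      walk_drop[of E xs j] d by simp
qed

lemma rt_walk:
  assumes "(\<lambda>u v. u\<in>T \<and> v\<in>T \<and> E u v)\<^sup>*\<^sup>* a b" "a \<in> T"
  shows "\<exists>xs. walk E xs \<and> set xs \<subseteq> T \<and> hd xs = a \<and> last xs = b"
  using assms
proof (induction rule: rtranclp_induct)
  case base
  then show ?case by (intro exI[of _ "[a]"]) auto
next
  case (step y z)
  then obtain ws where H: "walk E ws" "set ws \<subseteq> T" "hd ws = a" "last ws = y" by auto
  have "walk E (ws @ [z])" using walk_append[of ws E z "[]"] H step walk_ne[of E ws] by auto
  then show ?case using H step walk_ne[of E ws] by (intro exI[of _ "ws @ [z]"]) auto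
qed



locale G =
  fixes V :: "'a set" and E :: "'a \<Rightarrow> 'a \<Rightarrow> bool"
  assumes sg: "simple_graph V E" and finV: "finite V" and conn: "connected_on E V"
    and cyc: "\<forall>vs. induced_cycle V E vs \<longrightarrow> length vs = 4"
    and nodom: "\<not> embeds {1..6::nat} two_squares_edge V E"
begin

lemma sym: "E x y \<Longrightarrow> E y x" using sg unfolding simple_graph_def by blast
lemma irr: "\<not> E x x" using sg unfolding simple_graph_def by blast
lemma inV1: "E x y \<Longrightarrow> x \<in> V" using sg unfolding simple_graph_def by blast
lemma inV2: "E x y \<Longrightarrow> y \<in> V" using sg unfolding simple_graph_def by blast

lemma tri: assumes h: "E a b" "E b c" "E c a" shows False
proof -
  have "induced_cycle V E [a,b,c]"
    unfolding induced_cycle_def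
  proof (intro conjI allI impI)
    show "3 \<le> length [a,b,c]" by simp
    show "distinct [a,b,c]" using h irr by (metis distinct_length_2_or_more distinct_singleton)
    show "set [a,b,c] \<subseteq> V" using h inV1 by auto
    fix i j assume "i < length [a,b,c]" "j < length [a,b,c]"
    then have i: "i = 0 \<or> i = 1 \<or> i = 2" and j: "j = 0 \<or> j = 1 \<or> j = 2" by auto
    moreover have "E b a" "E c b" "E a c" "\<not> E a a" "\<not> E b b" "\<not> E c c"
      using sym[OF h(1)] sym[OF h(2)] sym[OF h(3)] irr by auto
    ultimately show "E ([a,b,c]!i) ([a,b,c]!j) \<longleftrightarrow> (j = Suc i mod length [a,b,c] \<or> i = Suc j mod length [a,b,c])"
      using i j h by (elim disjE) simp_all
  qed
  then show False using cyc by fastforce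
qed

lemma dom:
  assumes "E u1 u2" "E u2 u3" "E u3 u4" "E u4 u5" "E u5 u6" "E u6 u1" "E u3 u6"
    "\<not>E u1 u3" "\<not>E u1 u4" "\<not>E u1 u5" "\<not>E u2 u4" "\<not>E u2 u5" "\<not>E u2 u6" "\<not>E u3 u5" "\<not>E u4 u6"
  shows False
proof -
  define g where "g = (\<lambda>i::nat. if i=1 then u1 else if i=2 then u2 else if i=3 then u3
     else if i=4 then u4 else if i=5 then u5 else u6)"
  have S: "{1..6::nat} = {1,2,3,4,5,6}" by auto
  have tse: "two_squares_edge i j \<longleftrightarrow> (i,j) \<in> {(1,2),(2,1),(2,3),(3,2),(3,4),(4,3),(4,5),(5,4),(5,6),(6,5),(6,1),(1,6),(3,6),(6,3)}" for i j
    unfolding two_squares_edge_def by (auto simp: doubleton_eq_iff)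
  have P: "E u1 u2" "E u2 u3" "E u3 u4" "E u4 u5" "E u5 u6" "E u6 u1" "E u3 u6"
     "E u2 u1" "E u3 u2" "E u4 u3" "E u5 u4" "E u6 u5" "E u1 u6" "E u6 u3"
    using assms sym[OF assms(1)] sym[OF assms(2)] sym[OF assms(3)] sym[OF assms(4)]
      sym[OF assms(5)] sym[OF assms(6)] sym[OF assms(7)] by auto
  have Nc: "\<not>E y x" if "\<not>E x y" for x y using that sym by blast
  have N: "\<not>E u1 u3" "\<not>E u1 u4" "\<not>E u1 u5" "\<not>E u2 u4" "\<not>E u2 u5" "\<not>E u2 u6" "\<not>E u3 u5" "\<not>E u4 u6"
    "\<not>E u3 u1" "\<not>E u4 u1" "\<not>E u5 u1" "\<not>E u4 u2" "\<not>E u5 u2" "\<not>E u6 u2" "\<not>E u5 u3" "\<not>E u6 u4"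
    "\<not>E u1 u1" "\<not>E u2 u2" "\<not>E u3 u3" "\<not>E u4 u4" "\<not>E u5 u5" "\<not>E u6 u6"
    using assms(8-15) Nc[OF assms(8)] Nc[OF assms(9)] Nc[OF assms(10)] Nc[OF assms(11)]
      Nc[OF assms(12)] Nc[OF assms(13)] Nc[OF assms(14)] Nc[OF assms(15)] irr by auto
  have ne: "u1 \<noteq> u2" "u1 \<noteq> u3" "u1 \<noteq> u4" "u1 \<noteq> u5" "u1 \<noteq> u6"
    "u2 \<noteq> u3" "u2 \<noteq> u4" "u2 \<noteq> u5" "u2 \<noteq> u6" "u3 \<noteq> u4" "u3 \<noteq> u5" "u3 \<noteq> u6"
    "u4 \<noteq> u5" "u4 \<noteq> u6" "u5 \<noteq> u6"
    using P N by metis+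
  have "embeds {1..6::nat} two_squares_edge V E"
    unfolding embeds_def
  proof (intro exI conjI)
    show "inj_on g {1..6}" unfolding S inj_on_def g_def using ne by auto
    show "g ` {1..6} \<subseteq> V" using assms inV1 unfolding S g_def by auto
    show "\<forall>x\<in>{1..6}. \<forall>y\<in>{1..6}. E (g x) (g y) = two_squares_edge x y"
      unfolding S tse g_def by (simp add: P N)
  qed
  with nodom show False by simp
qed

end


context G begin

lemma L1:
  assumes TV: "T \<subseteq> V" and xV: "x \<in> V" and xT: "x \<notin> T"
  shows "walk E xs \<Longrightarrow> set xs \<subseteq> T \<Longrightarrow> hd xs \<noteq> last xs \<Longrightarrow> E x (hd xs) \<Longrightarrow> E x (last xs)
    \<Longrightarrow> \<exists>z\<in>T. E z (hd xs) \<and> E z (last xs)"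
proof (induction "length xs" arbitrary: xs rule: less_induct)
  case less
  define n where "n = length xs"
  have IH: "\<And>ys. length ys < n \<Longrightarrow> walk E ys \<Longrightarrow> set ys \<subseteq> T \<Longrightarrow> hd ys \<noteq> last ys \<Longrightarrow>
      E x (hd ys) \<Longrightarrow> E x (last ys) \<Longrightarrow> \<exists>z\<in>T. E z (hd ys) \<and> E z (last ys)"
    using less(1) n_def by blast
  have W: "walk E xs" and ST: "set xs \<subseteq> T" and ab: "hd xs \<noteq> last xs"
    and xa: "E x (hd xs)" and xb: "E x (last xs)" using less.prems by auto
  have ne: "xs \<noteq> []" using W by auto
  have hd0: "hd xs = xs!0" using ne by (simp add: hd_conv_nth)
  have lastn: "last xs = xs!(n-1)" using ne n_def by (simp add: last_conv_nth)
  have n1: "n \<ge> 1" using ne n_def by (cases xs) auto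
  have n2: "n \<ge> 2" using ab hd0 lastn n1 by (cases "n = 1") auto
  have inT: "xs!k \<in> T" if "k < n" for k using ST that n_def nth_mem by blast
  show "\<exists>z\<in>T. E z (hd xs) \<and> E z (last xs)"
  proof (cases "\<exists>i. 0 < i \<and> i < n - 1 \<and> E x (xs!i)")
    case True
    then obtain i where i: "0 < i" "i < n - 1" "E x (xs!i)" by blast
    define y where "y = xs!i"
    have tk: "walk E (take (Suc i) xs)" "set (take (Suc i) xs) \<subseteq> T" "hd (take (Suc i) xs) = hd xs"
      "last (take (Suc i) xs) = y" "length (take (Suc i) xs) < n"
      using walk_take[OF W, of "Suc i"] ST i n_def y_def set_take_subset[of "Suc i" xs]
      apply auto
      by (subst last_conv_nth) auto
    have dr: "walk E (drop i xs)" "set (drop i xs) \<subseteq> T" "hd (drop i xs) = y"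
      "last (drop i xs) = last xs" "length (drop i xs) < n"
      using walk_drop[OF W, of i] ST i n_def y_def set_drop_subset[of i xs]
      by (auto simp: hd_drop_conv_nth)
    consider "y = hd xs" | "y = last xs" | "y \<noteq> hd xs" "y \<noteq> last xs" by blast
    then show ?thesis
    proof cases
      case 1
      then show ?thesis using IH[OF dr(5,1,2)] dr ab xb i y_def by (metis (full_types))
    next
      case 2
      then show ?thesis using IH[OF tk(5,1,2)] tk ab xa i y_def by (metis (full_types))
    next
      case 3
      obtain u where u: "u \<in> T" "E u (hd xs)" "E u y"
        using IH[OF tk(5,1,2)] tk 3 xa i y_def by auto
      obtain u' where u': "u' \<in> T" "E u' y" "E u' (last xs)"
        using IH[OF dr(5,1,2)] dr 3 xb i y_def by auto
      show ?thesis
      proof (rule ccontr)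
        assume nt: "\<not> ?thesis"
        then have c1: "\<not> E u (last xs)" "\<not> E u' (hd xs)" "u \<noteq> u'" using u u' by auto
        let ?a = "hd xs" and ?b = "last xs"
        have xy: "E x y" using i y_def by simp
        show False
        proof (rule dom[of u' ?b x ?a u y])
          show "E u' ?b" by fact
          show "E ?b x" using sym[OF xb] .
          show "E x ?a" by fact
          show "E ?a u" using sym[OF u(2)] .
          show "E u y" by fact
          show "E y u'" using sym[OF u'(2)] .
          show "E x y" by fact
          show "\<not> E u' x" using tri[of u' x y] xy sym[OF u'(2)] by blast
          show "\<not> E u' ?a" by fact
          show "\<not> E u' u" using tri[of u' u y] u(3) sym[OF u'(2)] by blast
          show "\<not> E ?b ?a" using tri[of ?b ?a x] sym[OF xa] xb by blast
          show "\<not> E ?b u" using c1(1) sym by blast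
          show "\<not> E ?b y" using tri[of ?b y x] sym[OF xy] xb by blast
          show "\<not> E x u" using tri[of x u ?a] u(2) sym[OF xa] by blast
          show "\<not> E ?a y" using tri[of ?a y x] sym[OF xy] xa by blast
        qed
      qed
    qed
  next
    case noint: False
    show ?thesis
    proof (cases "\<exists>i j. Suc i < j \<and> j < n \<and> E (xs!i) (xs!j)")
      case True
      then obtain i j where ij: "Suc i < j" "j < n" "E (xs!i) (xs!j)" by blast
      define ys where "ys = take (Suc i) xs @ drop j xs"
      have "walk E ys" unfolding ys_def using splice1[OF W, of i j] ij n_def by auto
      moreover have "set ys \<subseteq> T" unfolding ys_def using ST set_take_subset[of "Suc i" xs]
          set_drop_subset[of j xs] by auto
      moreover have "length ys < n" unfolding ys_def using ij n_def by auto
      moreover have "hd ys = hd xs" "last ys = last xs" unfolding ys_def using ij n_def ne by (auto simp: hd_append)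
      ultimately show ?thesis using IH[of ys] ab xa xb by auto
    next
      case nochord: False
      show ?thesis
      proof (cases "distinct xs")
        case False
        then obtain i j where ij: "i < j" "j < n" "xs!i = xs!j"
          using n_def by (metis distinct_conv_nth linorder_neqE_nat)
        define ys where "ys = take i xs @ drop j xs"
        have "walk E ys" unfolding ys_def using splice2[OF W, of i j] ij n_def by auto
        moreover have "set ys \<subseteq> T" unfolding ys_def using ST set_take_subset[of i xs]
            set_drop_subset[of j xs] by auto
        moreover have "length ys < n" unfolding ys_def using ij n_def by auto
        moreover have "hd ys = hd xs"
        proof (cases "i = 0")
          case True then show ?thesis unfolding ys_def using ij n_def hd0 by (simp add: hd_drop_conv_nth)
        next
          case False then show ?thesis unfolding ys_def using ij n_def ne by (auto simp: hd_append)
        qed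
        moreover have "last ys = last xs" unfolding ys_def using ij n_def by auto
        ultimately show ?thesis using IH[of ys] ab xa xb by auto
      next
        case dist: True
        have n3: "n \<ge> 3"
        proof (rule ccontr)
          assume "\<not> n \<ge> 3"
          then have "n = 2" using n2 by auto
          then have "E (xs!0) (xs!1)" using walk_nth[OF W, of 0] n_def by auto
          then show False using tri[of x "xs!0" "xs!1"] xa xb hd0 lastn \<open>n = 2\<close> sym by auto
        qed
        have adjx: "E x (xs!k) \<longleftrightarrow> (k = 0 \<or> k = n - 1)" if "k < n" for k
        proof
          assume "E x (xs!k)"
          then show "k = 0 \<or> k = n - 1" using noint that by (metis Suc_pred' gr0I less_Suc_eq n1 less_one not_less)
        next
          assume "k = 0 \<or> k = n - 1" then show "E x (xs!k)" using xa xb hd0 lastn by auto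
        qed
        have adjxs: "E (xs!k) (xs!l) \<longleftrightarrow> (l = Suc k \<or> k = Suc l)" if "k < n" "l < n" for k l
        proof
          assume e: "E (xs!k) (xs!l)"
          show "l = Suc k \<or> k = Suc l"
          proof (rule ccontr)
            assume "\<not> ?thesis"
            then consider "k = l" | "Suc k < l" | "Suc l < k" by linarith
            then show False
            proof cases
              case 1 then show False using e irr by simp
            next
              case 2 then show False using nochord e that by blast
            next
              case 3 then show False using nochord sym[OF e] that by blast
            qed
          qed
        next
          assume "l = Suc k \<or> k = Suc l"
          then show "E (xs!k) (xs!l)"
          proof
            assume "l = Suc k" then show ?thesis using walk_nth[OF W, of k] that n_def by auto
          next
            assume "k = Suc l" then show ?thesis using walk_nth[OF W, of l] that n_def sym by auto
          qed
        qed
        have md: "Suc (Suc k) mod Suc n = (if k = n - 1 then 0 else Suc (Suc k))" if "k < n" for k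
          using that n3 by auto
        have m1: "Suc 0 mod Suc n = Suc 0" using n3 by auto
        have ic: "induced_cycle V E (x # xs)"
          unfolding induced_cycle_def
        proof (intro conjI allI impI)
          show "3 \<le> length (x # xs)" using n3 n_def by simp
          show "distinct (x # xs)" using dist xT ST by auto
          show "set (x # xs) \<subseteq> V" using xV ST TV by auto
          fix i j assume ij: "i < length (x # xs)" "j < length (x # xs)"
          show "E ((x # xs)!i) ((x # xs)!j) \<longleftrightarrow> (j = Suc i mod length (x # xs) \<or> i = Suc j mod length (x # xs))"
          proof (cases i)
            case 0
            then show ?thesis
            proof (cases j)
              case 0 then show ?thesis using \<open>i = 0\<close> irr m1 n_def by simp
            next
              case (Suc l)
              then have l: "l < n" using ij n_def by simp
              show ?thesis using \<open>i = 0\<close> Suc adjx[OF l] md[OF l] m1 n_def n3 by auto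
            qed
          next
            case (Suc k)
            then have k: "k < n" using ij n_def by simp
            show ?thesis
            proof (cases j)
              case 0 then show ?thesis using Suc adjx[OF k] md[OF k] m1 n_def n3 sym
                by (auto dest: sym)
            next
              case (Suc l)
              then have l: "l < n" using ij n_def by simp
              show ?thesis using \<open>i = Suc k\<close> Suc adjxs[OF k l] md[OF l] md[OF k] n_def n3 k l by auto
            qed
          qed
        qed
        then have "n = 3" using cyc n_def by auto
        then have e1: "E (xs!1) (xs!0)" "E (xs!1) (xs!2)" "xs!1 \<in> T"
          using inT[of 1] walk_nth[OF W, of 0] walk_nth[OF W, of 1] n_def sym
          by (auto simp: numeral_2_eq_2)
        show ?thesis using e1 hd0 lastn \<open>n = 3\<close> by (intro bexI[of _ "xs!1"]) auto
      qed
    qed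
  qed
qed

end


context G begin

lemma first_step:
  assumes "(\<lambda>u v. u\<in>T \<and> v\<in>T \<and> E u v)\<^sup>*\<^sup>* a b" "a \<noteq> b"
  shows "\<exists>w\<in>T. E a w"
  using assms(1)
proof (cases rule: converse_rtranclpE)
  case base then show ?thesis using assms(2) by simp
next
  case (step c) then show ?thesis by blast
qed

lemma L1':
  assumes "T \<subseteq> V" "connected_on E T" "x \<in> V" "x \<notin> T" "a \<in> T" "b \<in> T" "a \<noteq> b" "E x a" "E x b"
  shows "\<exists>z\<in>T. E z a \<and> E z b"
proof -
  have R: "(\<lambda>u v. u\<in>T \<and> v\<in>T \<and> E u v)\<^sup>*\<^sup>* a b" using assms(2,5,6) unfolding connected_on_def by blast
  then obtain xs where H: "walk E xs" "set xs \<subseteq> T" "hd xs = a" "last xs = b"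
    using rt_walk[OF R assms(5)] by blast
  have "\<exists>z\<in>T. E z (hd xs) \<and> E z (last xs)" using L1[OF assms(1,3,4) H(1,2)] H(3,4) assms(7,8,9) by simp
  then show ?thesis using H by simp
qed

lemma L2:
  assumes TV: "T \<subseteq> V" and cT: "connected_on E T" and xV: "x \<in> V" and xT: "x \<notin> T"
    and t: "t \<in> T" "E x t" and t': "t' \<in> T" "t' \<noteq> t"
  shows "\<exists>z\<in>T. \<forall>a\<in>T. E x a \<longrightarrow> E z a"
proof -
  have finT: "finite T" using TV finV finite_subset by blast
  define A where "A = {a\<in>T. E x a}"
  have finA: "finite A" using finT A_def by auto
  define cnt where "cnt z = card (A \<inter> {a. E z a})" for z
  define M where "M = Max (cnt ` T)"
  have "M \<in> cnt ` T" unfolding M_def using finT t by (intro Max_in) auto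
  then obtain z where z: "z \<in> T" "cnt z = M" by auto
  have zmax: "cnt z' \<le> cnt z" if "z' \<in> T" for z' using that finT z unfolding M_def by auto
  have "(\<lambda>u v. u\<in>T \<and> v\<in>T \<and> E u v)\<^sup>*\<^sup>* t t'" using cT t t' unfolding connected_on_def by blast
  then obtain w0 where w0: "w0 \<in> T" "E t w0" using first_step t' by blast
  have "t \<in> A \<inter> {a. E w0 a}" using w0 t sym[OF w0(2)] A_def by auto
  then have "cnt w0 \<ge> 1" unfolding cnt_def using finA
    by (metis One_nat_def Suc_leI card_gt_0_iff empty_iff finite_Int)
  then have "cnt z \<ge> 1" using zmax[OF w0(1)] by simp
  then have "A \<inter> {a. E z a} \<noteq> {}" unfolding cnt_def by auto
  then obtain b where b: "b \<in> T" "E x b" "E z b" unfolding A_def by auto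
  show ?thesis
  proof (intro bexI[OF _ z(1)] ballI impI)
    fix a assume a: "a \<in> T" "E x a"
    show "E z a"
    proof (rule ccontr)
      assume za: "\<not> E z a"
      have ab: "a \<noteq> b" using za b by auto
      obtain w where w: "w \<in> T" "E w a" "E w b" using L1'[OF TV cT xV xT a(1) b(1) ab a(2) b(2)] by blast
      show False
      proof (cases "A \<inter> {a. E z a} \<subseteq> {a. E w a}")
        case True
        have "insert a (A \<inter> {a. E z a}) \<subseteq> A \<inter> {a. E w a}" using True a w A_def by auto
        then have "card (insert a (A \<inter> {a. E z a})) \<le> cnt w" unfolding cnt_def
          using finA by (intro card_mono) auto
        moreover have "card (insert a (A \<inter> {a. E z a})) = Suc (cnt z)" unfolding cnt_def
          using finA za by (subst card_insert_disjoint) auto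
        ultimately show False using zmax[OF w(1)] by simp
      next
        case False
        then obtain c where c: "c \<in> T" "E x c" "E z c" "\<not> E w c" unfolding A_def by auto
        show False
        proof (rule dom[of z c x a w b])
          show "E z c" by fact
          show "E c x" using sym[OF c(2)] .
          show "E x a" by fact
          show "E a w" using sym[OF w(2)] .
          show "E w b" by fact
          show "E b z" using sym[OF b(3)] .
          show "E x b" by fact
          show "\<not> E z x" using tri[of z x b] b sym[OF b(3)] by blast
          show "\<not> E z a" by fact
          show "\<not> E z w" using tri[of z w b] w(3) sym[OF b(3)] by blast
          show "\<not> E c a" using tri[of c a x] sym[OF a(2)] c(2) by blast
          show "\<not> E c w" using c(4) sym[of c w] by blast
          show "\<not> E c b" using tri[of c b x] sym[OF b(2)] c(2) by blast
          show "\<not> E x w" using tri[of x w a] w(2) sym[OF a(2)] by blast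
          show "\<not> E a b" using tri[of a b x] sym[OF b(2)] a(2) by blast
        qed
      qed
    qed
  qed
qed

lemma cross:
  assumes "T \<subseteq> V" "t0 \<in> T" "y \<in> V" "y \<notin> T"
  shows "\<exists>x\<in>V - T. \<exists>t\<in>T. E x t"
proof -
  have R: "(\<lambda>u v. u\<in>V \<and> v\<in>V \<and> E u v)\<^sup>*\<^sup>* t0 y" using conn assms unfolding connected_on_def by blast
  have "y \<notin> T \<longrightarrow> (\<exists>x\<in>V - T. \<exists>t\<in>T. E x t)"
    using R
  proof (induction rule: rtranclp_induct)
    case base then show ?case using assms(2) by simp
  next
    case (step u v)
    show ?case
    proof
      assume vT: "v \<notin> T"
      show "\<exists>x\<in>V - T. \<exists>t\<in>T. E x t"
      proof (cases "u \<in> T")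
        case True
        have "E v u" using sym[of u v] step(2) by simp
        then show ?thesis using True vT step(2) by blast
      next
        case False then show ?thesis using step(3) by blast
      qed
    qed
  qed
  then show ?thesis using assms(4) by blast
qed

lemma conn_insert:
  assumes "connected_on E T" "t \<in> T" "E x t"
  shows "connected_on E (insert x T)"
proof -
  let ?R = "\<lambda>u v. u\<in>T \<and> v\<in>T \<and> E u v" and ?R' = "\<lambda>u v. u\<in>insert x T \<and> v\<in>insert x T \<and> E u v"
  have mono: "?R'\<^sup>*\<^sup>* p q" if "?R\<^sup>*\<^sup>* p q" for p q
    using that
  proof (induction rule: rtranclp_induct)
    case base show ?case by simp
  next
    case (step u v)
    then have "?R' u v" by simp
    from rtranclp.rtrancl_into_rtrancl[OF step(3) this] show ?case .
  qed
  have xt: "?R' x t" "?R' t x" using assms sym[OF assms(3)] by auto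
  have T: "?R'\<^sup>*\<^sup>* p q" if "p \<in> T" "q \<in> T" for p q
  proof -
    have "?R\<^sup>*\<^sup>* p q" using assms(1) that unfolding connected_on_def by blast
    then show ?thesis by (rule mono)
  qed
  show ?thesis unfolding connected_on_def
  proof (intro conjI ballI)
    show "insert x T \<noteq> {}" by simp
    fix p q assume pq: "p \<in> insert x T" "q \<in> insert x T"
    show "?R'\<^sup>*\<^sup>* p q"
    proof (cases "p = x")
      case True
      show ?thesis
      proof (cases "q = x")
        case True then show ?thesis using \<open>p = x\<close> by simp
      next
        case False then have "q \<in> T" using pq by auto
        then have "?R'\<^sup>*\<^sup>* x q" using converse_rtranclp_into_rtranclp[OF xt(1) T[OF assms(2) \<open>q \<in> T\<close>]] by simp
        then show ?thesis using True by simp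
      qed
    next
      case False then have p: "p \<in> T" using pq by auto
      show ?thesis
      proof (cases "q = x")
        case True
        have "?R'\<^sup>*\<^sup>* p x" using rtranclp.rtrancl_into_rtrancl[OF T[OF p assms(2)] xt(2)] by simp
        then show ?thesis using True by simp
      next
        case False then have "q \<in> T" using pq by auto
        then show ?thesis using T[OF p] by simp
      qed
    qed
  qed
qed

lemma ext:
  "card (V - T) = k \<Longrightarrow> T \<subseteq> V \<Longrightarrow> connected_on E T \<Longrightarrow> graph_hom T E V E g \<Longrightarrow>
    \<exists>h. graph_hom V E V E h \<and> (\<forall>t\<in>T. h t = g t)"
proof (induction k arbitrary: T g)
  case 0
  then have "T = V" using finV by (metis Diff_eq_empty_iff card_0_eq finite_Diff subset_antisym)
  then show ?case using 0(4) by (intro exI[of _ g]) simp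
next
  case (Suc k)
  have TV: "T \<subseteq> V" and cT: "connected_on E T" and hg: "graph_hom T E V E g" using Suc.prems by auto
  have "V - T \<noteq> {}" using Suc.prems(1) by (metis card.empty nat.distinct(1))
  then obtain y where y: "y \<in> V" "y \<notin> T" by auto
  obtain t0 where "t0 \<in> T" using cT unfolding connected_on_def by auto
  then obtain x t where x: "x \<in> V" "x \<notin> T" and t: "t \<in> T" "E x t" using cross[OF TV _ y] by blast
  have gV: "g p \<in> V" if "p \<in> T" for p using hg that unfolding graph_hom_def by blast
  have gE: "E (g p) (g q)" if "p \<in> T" "q \<in> T" "E p q" for p q using hg that unfolding graph_hom_def by blast
  obtain yv where yv: "yv \<in> V" "\<forall>a\<in>T. E x a \<longrightarrow> E yv (g a)"
  proof (cases "\<exists>t'\<in>T. t' \<noteq> t")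
    case True
    then obtain t' where t': "t' \<in> T" "t' \<noteq> t" by blast
    obtain z where z: "z \<in> T" "\<forall>a\<in>T. E x a \<longrightarrow> E z a" using L2[OF TV cT x t t'] by blast
    show ?thesis
    proof (rule that[of "g z"])
      show "g z \<in> V" using gV[OF z(1)] .
      show "\<forall>a\<in>T. E x a \<longrightarrow> E (g z) (g a)" using z gE by blast
    qed
  next
    case False
    then have Tt: "T = {t}" using t by blast
    obtain v where v: "v \<in> V" "v \<noteq> g t"
    proof (cases "g t = x")
      case True
      have "t \<in> V" "t \<noteq> g t" using t TV x True by auto
      then show ?thesis by (rule that)
    next
      case False then show ?thesis using that[of x] x by auto
    qed
    have R: "(\<lambda>u v. u\<in>V \<and> v\<in>V \<and> E u v)\<^sup>*\<^sup>* (g t) v" using conn gV[OF t(1)] v unfolding connected_on_def by blast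
    have "g t \<noteq> v" using v by auto
    then obtain w where w: "w \<in> V" "E (g t) w" using first_step[OF R] by blast
    show ?thesis using that[of w] w Tt sym[OF w(2)] by blast
  qed
  define g' where "g' = g(x := yv)"
  have hg': "graph_hom (insert x T) E V E g'"
    unfolding graph_hom_def g'_def
  proof (intro conjI ballI impI)
    fix p assume "p \<in> insert x T" then show "(g(x := yv)) p \<in> V" using yv gV by auto
  next
    fix p q assume pq: "p \<in> insert x T" "q \<in> insert x T" "E p q"
    show "E ((g(x := yv)) p) ((g(x := yv)) q)"
    proof (cases "p = x")
      case True
      then have "q \<noteq> x" using pq irr by auto
      then show ?thesis using True pq yv by auto
    next
      case False
      show ?thesis
      proof (cases "q = x")
        case True
        then have "E yv (g p)" using pq yv False sym[OF pq(3)] by auto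
        then show ?thesis using True False sym[OF \<open>E yv (g p)\<close>] by auto
      next
        case False
        then show ?thesis using \<open>p \<noteq> x\<close> pq gE by auto
      qed
    qed
  qed
  have "V - insert x T = (V - T) - {x}" by auto
  then have ck: "card (V - insert x T) = k" using Suc.prems(1) x finV by (simp add: card_Diff_singleton)
  have TV': "insert x T \<subseteq> V" using TV x by auto
  have "\<exists>h. graph_hom V E V E h \<and> (\<forall>p\<in>insert x T. h p = g' p)"
    by (rule Suc.IH[OF ck TV' conn_insert[OF cT t(1) t(2)] hg'])
  then obtain h where h: "graph_hom V E V E h" "\<forall>p\<in>insert x T. h p = g' p" by blast
  then show ?case using x(2) unfolding g'_def by auto
qed

end

theorem lemma5p2:
  fixes V :: "'a set" and E :: "'a \<Rightarrow> 'a \<Rightarrow> bool"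
  assumes "simple_graph V E"
    and "finite V"
    and "connected_on E V"
    and "\<forall>vs. induced_cycle V E vs \<longrightarrow> length vs = 4"
    and "\<not> embeds {1..6::nat} two_squares_edge V E"
  shows "C_HH V E"
proof -
  interpret G V E using assms by unfold_locales
  show ?thesis unfolding C_HH_def
  proof (intro allI impI)
    fix S f assume "S \<subseteq> V \<and> finite S \<and> connected_on E S \<and> graph_hom S E V E f"
    then show "\<exists>h. graph_hom V E V E h \<and> (\<forall>x\<in>S. h x = f x)"
      using ext[OF refl, of S f] by blast
  qed
qed


end
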